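(* Let $G$ be a group, $s$ a central involution of $G$, and $(L,\zeta)$ a connected $G$-gain graph such that $L$ is isomorphic to the line graph $L(\Gamma)$ of some graph $\Gamma$ and $L$ is not isomorphic to any of $F_1,F_2,F_3$. Then $(L,\zeta)$ is a gain-line graph if and only if every odd triangle of $L$ has gain $s$.
   Context: Graphs are finite and simple. A $G$-gain graph $(\Gamma,\psi)$: graph with a map $\psi$ on ordered pairs of adjacent vertices into $G$ with $\psi(v,u)=\psi(u,v)^{-1}$. Line graph $L(\Gamma)$: vertex set $E_\Gamma$, edges adjacent iff sharing an endpoint. With $V_\Gamma=\{v_1,\dots,v_n\}$, $E_\Gamma=\{e_1,\dots,e_m\}$, a $G$-phase of $\Gamma$ is a matrix $H$ with $H_{i,k}\in G$ if $v_i\in e_k$, $0$ otherwise; $\Psi_L(H)(e_p,e_q)=s\,(H_{r,p})^{-1}H_{r,q}$ with $v_r$ the common endpoint of $e_p,e_q$. $(L,\zeta)$ is a gain-line graph (w.r.t. $s$) if there are a graph $\Gamma$, a graph isomorphism $\phi:L(\Gamma)\to L$ and a $G$-phase $H$ of $\Gamma$ with $\Psi_L(H)=\zeta\circ\phi$. A triangle's gain is $\zeta(v_1,v_2)\zeta(v_2,v_3)\zeta(v_3,v_1)$ (whether it equals the central element $s$ is independent of starting vertex and orientation). A triangle $\{v_1,v_2,v_3\}$ is odd if some vertex $w$ of $L$ is adjacent to an odd number of $v_1,v_2,v_3$. $F_1$ is the diamond ($K_4$ minus an edge); $F_2$ is the wheel consisting of a $4$-cycle and a hub adjacent to its four vertices;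 $F_3$ is the octahedron $K_{2,2,2}$. *)

theory Defs
  imports Main
begin

text \<open>The group G is the type 'g of class group_add (not assumed commutative), written
additively: the group product is +, the identity is 0, the inverse is unary minus.\<close>

definition simple_graph :: "'v set \<Rightarrow> ('v \<Rightarrow> 'v \<Rightarrow> bool) \<Rightarrow> bool" where
  "simple_graph V A \<longleftrightarrow> finite V \<and> (\<forall>u v. A u v \<longrightarrow> u \<in> V \<and> v \<in> V \<and> u \<noteq> v)
     \<and> (\<forall>u v. A u v \<longrightarrow> A v u)"

definition graph_connected :: "'v set \<Rightarrow> ('v \<Rightarrow> 'v \<Rightarrow> bool) \<Rightarrow> bool" where
  "graph_connected V A \<longleftrightarrow> V \<noteq> {} \<and> (\<forall>u\<in>V. \<forall>v\<in>V. A\<^sup>*\<^sup>* u v)"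

definition graph_iso :: "'a set \<Rightarrow> ('a \<Rightarrow> 'a \<Rightarrow> bool) \<Rightarrow> 'b set \<Rightarrow> ('b \<Rightarrow> 'b \<Rightarrow> bool)
    \<Rightarrow> ('a \<Rightarrow> 'b) \<Rightarrow> bool" where
  "graph_iso V1 A1 V2 A2 \<phi> \<longleftrightarrow> bij_betw \<phi> V1 V2 \<and>
     (\<forall>x\<in>V1. \<forall>y\<in>V1. A1 x y \<longleftrightarrow> A2 (\<phi> x) (\<phi> y))"

definition isomorphic :: "'a set \<Rightarrow> ('a \<Rightarrow> 'a \<Rightarrow> bool) \<Rightarrow> 'b set \<Rightarrow> ('b \<Rightarrow> 'b \<Rightarrow> bool) \<Rightarrow> bool" where
  "isomorphic V1 A1 V2 A2 \<longleftrightarrow> (\<exists>\<phi>. graph_iso V1 A1 V2 A2 \<phi>)"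

text \<open>A finite simple graph Gamma given by vertex set W and edge set Ed (each edge a
2-element subset of W). Vertices are taken in nat (every finite graph has such a copy).\<close>
definition edge_graph :: "nat set \<Rightarrow> nat set set \<Rightarrow> bool" where
  "edge_graph W Ed \<longleftrightarrow> finite W \<and> (\<forall>e\<in>Ed. e \<subseteq> W \<and> card e = 2)"

definition line_adj :: "nat set set \<Rightarrow> nat set \<Rightarrow> nat set \<Rightarrow> bool" where
  "line_adj Ed p q \<longleftrightarrow> p \<in> Ed \<and> q \<in> Ed \<and> p \<noteq> q \<and> p \<inter> q \<noteq> {}"

definition gain_graph :: "'v set \<Rightarrow> ('v \<Rightarrow> 'v \<Rightarrow> bool) \<Rightarrow> ('v \<Rightarrow> 'v \<Rightarrow> 'g::group_add) \<Rightarrow> bool" where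
  "gain_graph V A \<zeta> \<longleftrightarrow> simple_graph V A \<and> (\<forall>u v. A u v \<longrightarrow> \<zeta> v u = - \<zeta> u v)"

text \<open>Gain-line graph w.r.t. s: there are a graph Gamma, an isomorphism phi from L(Gamma) to L,
and a G-phase H of Gamma (H r e is the entry for the incident pair vertex r, edge e; entries for
non-incident pairs are irrelevant) with Psi_L(H) = zeta o phi, where
Psi_L(H)(p,q) = s (H r p)^-1 (H r q) for the common endpoint r of p and q.\<close>
definition gain_line_graph :: "'g::group_add \<Rightarrow> 'v set \<Rightarrow> ('v \<Rightarrow> 'v \<Rightarrow> bool) \<Rightarrow> ('v \<Rightarrow> 'v \<Rightarrow> 'g) \<Rightarrow> bool" where
  "gain_line_graph s V A \<zeta> \<longleftrightarrow>
     (\<exists>W Ed \<phi> (H :: nat \<Rightarrow> nat set \<Rightarrow> 'g).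
        edge_graph W Ed \<and> graph_iso Ed (line_adj Ed) V A \<phi> \<and>
        (\<forall>p\<in>Ed. \<forall>q\<in>Ed. \<forall>r. p \<noteq> q \<and> r \<in> p \<and> r \<in> q \<longrightarrow>
            \<zeta> (\<phi> p) (\<phi> q) = s + - H r p + H r q))"

definition triangle :: "'v set \<Rightarrow> ('v \<Rightarrow> 'v \<Rightarrow> bool) \<Rightarrow> 'v \<Rightarrow> 'v \<Rightarrow> 'v \<Rightarrow> bool" where
  "triangle V A a b c \<longleftrightarrow> a \<in> V \<and> b \<in> V \<and> c \<in> V \<and> A a b \<and> A b c \<and> A c a"

definition odd_triangle :: "'v set \<Rightarrow> ('v \<Rightarrow> 'v \<Rightarrow> bool) \<Rightarrow> 'v \<Rightarrow> 'v \<Rightarrow> 'v \<Rightarrow> bool" where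
  "odd_triangle V A a b c \<longleftrightarrow> triangle V A a b c \<and>
     (\<exists>w\<in>V. odd (card {x \<in> {a, b, c}. A w x}))"

definition triangle_gain :: "('v \<Rightarrow> 'v \<Rightarrow> 'g::group_add) \<Rightarrow> 'v \<Rightarrow> 'v \<Rightarrow> 'v \<Rightarrow> 'g" where
  "triangle_gain \<zeta> a b c = \<zeta> a b + \<zeta> b c + \<zeta> c a"

text \<open>F1: diamond (K4 minus the edge 2-3).\<close>
definition F1_adj :: "nat \<Rightarrow> nat \<Rightarrow> bool" where
  "F1_adj x y \<longleftrightarrow> x < 4 \<and> y < 4 \<and> x \<noteq> y \<and> {x, y} \<noteq> {2, 3}"

text \<open>F2: wheel with hub 0 and 4-cycle 1-2-3-4-1.\<close>
definition F2_adj :: "nat \<Rightarrow> nat \<Rightarrow> bool" where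
  "F2_adj x y \<longleftrightarrow> {x, y} \<in> {{0,1},{0,2},{0,3},{0,4},{1,2},{2,3},{3,4},{4,1}}"

text \<open>F3: octahedron K_{2,2,2} with parts {0,1},{2,3},{4,5}.\<close>
definition F3_adj :: "nat \<Rightarrow> nat \<Rightarrow> bool" where
  "F3_adj x y \<longleftrightarrow> x < 6 \<and> y < 6 \<and> x div 2 \<noteq> y div 2"

end

theory Submission
  imports Defs
begin


lemma f3_ab: "P A \<Longrightarrow> P B \<Longrightarrow> \<not> P C \<Longrightarrow> {w \<in> {A,B,C}. P w} = {A,B}" by auto
lemma f3_bc: "\<not> P A \<Longrightarrow> P B \<Longrightarrow> P C \<Longrightarrow> {w \<in> {A,B,C}. P w} = {B,C}" by auto
lemma f3_ac: "P A \<Longrightarrow> \<not> P B \<Longrightarrow> P C \<Longrightarrow> {w \<in> {A,B,C}. P w} = {A,C}" by auto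
lemma f3_abc: "P A \<Longrightarrow> P B \<Longrightarrow> P C \<Longrightarrow> {w \<in> {A,B,C}. P w} = {A,B,C}" by auto
lemma f3_0: "\<not> P A \<Longrightarrow> \<not> P B \<Longrightarrow> \<not> P C \<Longrightarrow> {w \<in> {A,B,C}. P w} = {}" by auto
lemma f3_a: "P A \<Longrightarrow> \<not> P B \<Longrightarrow> \<not> P C \<Longrightarrow> {w \<in> {A,B,C}. P w} = {A}" by auto
lemma f3_b: "\<not> P A \<Longrightarrow> P B \<Longrightarrow> \<not> P C \<Longrightarrow> {w \<in> {A,B,C}. P w} = {B}" by auto
lemma f3_c: "\<not> P A \<Longrightarrow> \<not> P B \<Longrightarrow> P C \<Longrightarrow> {w \<in> {A,B,C}. P w} = {C}" by auto


lemma iso_inv: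
  assumes "graph_iso V1 A1 V2 A2 f"
  shows "graph_iso V2 A2 V1 A1 (inv_into V1 f)"
proof -
  have b: "bij_betw f V1 V2" and ad: "\<forall>x\<in>V1. \<forall>y\<in>V1. A1 x y \<longleftrightarrow> A2 (f x) (f y)"
    using assms unfolding graph_iso_def by auto
  show ?thesis unfolding graph_iso_def
  proof (intro conjI ballI)
    show "bij_betw (inv_into V1 f) V2 V1" using b by (rule bij_betw_inv_into)
    fix x y assume x: "x \<in> V2" and y: "y \<in> V2"
    have ix: "inv_into V1 f x \<in> V1" "f (inv_into V1 f x) = x"
      using x b by (auto simp: bij_betw_def intro: inv_into_into f_inv_into_f)
    have iy: "inv_into V1 f y \<in> V1" "f (inv_into V1 f y) = y"
      using y b by (auto simp: bij_betw_def intro: inv_into_into f_inv_into_f)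
    show "A2 x y \<longleftrightarrow> A1 (inv_into V1 f x) (inv_into V1 f y)"
      using ad ix iy by metis
  qed
qed

lemma iso_comp:
  assumes "graph_iso V1 A1 V2 A2 f" "graph_iso V2 A2 V3 A3 g"
  shows "graph_iso V1 A1 V3 A3 (g \<circ> f)"
  using assms unfolding graph_iso_def
  by (auto intro: bij_betw_trans) (metis bij_betw_apply)+

lemma isomorphic_trans2:
  assumes "isomorphic X XA Y YA" "isomorphic X XA Z ZA"
  shows "isomorphic Y YA Z ZA"
  using assms iso_inv iso_comp unfolding isomorphic_def by metis

lemma iso_nth:
  assumes "distinct es"
    and "\<forall>i<length es. \<forall>j<length es. B i j \<longleftrightarrow> line_adj (set es) (es!i) (es!j)"
  shows "graph_iso {0..<length es} B (set es) (line_adj (set es)) (nth es)"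
  unfolding graph_iso_def using assms
  by (auto intro!: bij_betw_nth)

lemma all3: "(\<forall>i<(3::nat). P i) \<longleftrightarrow> P 0 \<and> P 1 \<and> P 2"
proof -
  have e: "{..<3::nat} = {0,1,2}" by auto
  have "(\<forall>i<(3::nat). P i) \<longleftrightarrow> (\<forall>i\<in>{..<3::nat}. P i)" by auto
  also have "\<dots> \<longleftrightarrow> P 0 \<and> P 1 \<and> P 2" unfolding e by simp
  finally show ?thesis .
qed

lemma all4: "(\<forall>i<(4::nat). P i) \<longleftrightarrow> P 0 \<and> P 1 \<and> P 2 \<and> P 3"
proof -
  have e: "{..<4::nat} = {0,1,2,3}" by auto
  have "(\<forall>i<(4::nat). P i) \<longleftrightarrow> (\<forall>i\<in>{..<4::nat}. P i)" by auto
  also have "\<dots> \<longleftrightarrow> P 0 \<and> P 1 \<and> P 2 \<and> P 3" unfolding e by simp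
  finally show ?thesis .
qed

lemma all5: "(\<forall>i<(5::nat). P i) \<longleftrightarrow> P 0 \<and> P 1 \<and> P 2 \<and> P 3 \<and> P 4"
proof -
  have e: "{..<5::nat} = {0,1,2,3,4}" by auto
  have "(\<forall>i<(5::nat). P i) \<longleftrightarrow> (\<forall>i\<in>{..<5::nat}. P i)" by auto
  also have "\<dots> \<longleftrightarrow> P 0 \<and> P 1 \<and> P 2 \<and> P 3 \<and> P 4" unfolding e by simp
  finally show ?thesis .
qed

lemma all6: "(\<forall>i<(6::nat). P i) \<longleftrightarrow> P 0 \<and> P 1 \<and> P 2 \<and> P 3 \<and> P 4 \<and> P 5"
proof -
  have e: "{..<6::nat} = {0,1,2,3,4,5}" by auto
  have "(\<forall>i<(6::nat). P i) \<longleftrightarrow> (\<forall>i\<in>{..<6::nat}. P i)" by auto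
  also have "\<dots> \<longleftrightarrow> P 0 \<and> P 1 \<and> P 2 \<and> P 3 \<and> P 4 \<and> P 5" unfolding e by simp
  finally show ?thesis .
qed

lemma F1_iso:
  assumes d: "distinct [r,a,b,c]" and E: "Ed = {{r,a},{r,b},{r,c},{a,b}}"
  shows "isomorphic Ed (line_adj Ed) {0..<4} F1_adj"
proof -
  let ?es = "[{r,a},{r,b},{r,c},{a,b}]"
  have s: "set ?es = Ed" using E by auto
  have L: "length ?es = 4" by simp
  have c: "\<forall>i<4. \<forall>j<4. F1_adj i j \<longleftrightarrow> line_adj (set ?es) (?es!i) (?es!j)"
    unfolding all4 using d by (simp add: F1_adj_def line_adj_def doubleton_eq_iff)
  have "graph_iso {0..<length ?es} F1_adj (set ?es) (line_adj (set ?es)) (nth ?es)"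
    apply (rule iso_nth)
    using d apply (simp add: doubleton_eq_iff)
    using c unfolding L .
  from iso_inv[OF this] have "graph_iso Ed (line_adj Ed) {0..<4} F1_adj (inv_into {0..<length ?es} (nth ?es))"
    unfolding s L .
  then show ?thesis unfolding isomorphic_def by blast
qed

lemma F2_iso:
  assumes d: "distinct [r,a,b,c]" and E: "Ed = {{r,b},{r,a},{r,c},{b,c},{a,b}}"
  shows "isomorphic Ed (line_adj Ed) {0..<5} F2_adj"
proof -
  let ?es = "[{r,b},{r,a},{r,c},{b,c},{a,b}]"
  have s: "set ?es = Ed" using E by auto
  have L: "length ?es = 5" by simp
  have c: "\<forall>i<5. \<forall>j<5. F2_adj i j \<longleftrightarrow> line_adj (set ?es) (?es!i) (?es!j)"
    unfolding all5 using d by (simp add: F2_adj_def line_adj_def doubleton_eq_iff)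
  have "graph_iso {0..<length ?es} F2_adj (set ?es) (line_adj (set ?es)) (nth ?es)"
    apply (rule iso_nth)
    using d apply (simp add: doubleton_eq_iff)
    using c unfolding L .
  from iso_inv[OF this] have "graph_iso Ed (line_adj Ed) {0..<5} F2_adj (inv_into {0..<length ?es} (nth ?es))"
    unfolding s L .
  then show ?thesis unfolding isomorphic_def by blast
qed

lemma F3_iso:
  assumes d: "distinct [r,a,b,c]" and E: "Ed = {{r,a},{b,c},{r,b},{a,c},{r,c},{a,b}}"
  shows "isomorphic Ed (line_adj Ed) {0..<6} F3_adj"
proof -
  let ?es = "[{r,a},{b,c},{r,b},{a,c},{r,c},{a,b}]"
  have s: "set ?es = Ed" using E by auto
  have L: "length ?es = 6" by simp
  have c: "\<forall>i<6. \<forall>j<6. F3_adj i j \<longleftrightarrow> line_adj (set ?es) (?es!i) (?es!j)"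
    unfolding all6 using d by (simp add: F3_adj_def line_adj_def doubleton_eq_iff)
  have "graph_iso {0..<length ?es} F3_adj (set ?es) (line_adj (set ?es)) (nth ?es)"
    apply (rule iso_nth)
    using d apply (simp add: doubleton_eq_iff)
    using c unfolding L .
  from iso_inv[OF this] have "graph_iso Ed (line_adj Ed) {0..<6} F3_adj (inv_into {0..<length ?es} (nth ?es))"
    unfolding s L .
  then show ?thesis unfolding isomorphic_def by blast
qed

lemma K3_iso:
  assumes d: "distinct [r,a,b,c]" and E: "Ed = {{r,a},{r,b},{r,c}}"
  shows "\<exists>f. graph_iso {0..<3::nat} (\<lambda>i j. i \<noteq> j) Ed (line_adj Ed) f"
proof -
  let ?es = "[{r,a},{r,b},{r,c}]"
  have s: "set ?es = Ed" using E by auto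
  have L: "length ?es = 3" by simp
  have c: "\<forall>i<3. \<forall>j<3. (i \<noteq> j) \<longleftrightarrow> line_adj (set ?es) (?es!i) (?es!j)"
    unfolding all3 using d by (simp add: line_adj_def doubleton_eq_iff)
  have "graph_iso {0..<length ?es} (\<lambda>i j. i \<noteq> j) (set ?es) (line_adj (set ?es)) (nth ?es)"
    apply (rule iso_nth)
    using d apply (simp add: doubleton_eq_iff)
    using c unfolding L .
  then show ?thesis unfolding s L by blast
qed

lemma K3_tri:
  "graph_iso {0..<3::nat} (\<lambda>i j. i \<noteq> j) {{0,1},{1,2},{0,2::nat}} (line_adj {{0,1},{1,2},{0,2}}) (nth [{0,1},{1,2},{0,2}])"
proof -
  let ?es = "[{0,1},{1,2},{0,2::nat}]"
  have s: "set ?es = {{0,1},{1,2},{0,2}}" by auto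
  have L: "length ?es = 3" by simp
  have c: "\<forall>i<3. \<forall>j<3. (i \<noteq> j) \<longleftrightarrow> line_adj (set ?es) (?es!i) (?es!j)"
    unfolding all3 by (simp add: line_adj_def doubleton_eq_iff)
  have "graph_iso {0..<length ?es} (\<lambda>i j. i \<noteq> j) (set ?es) (line_adj (set ?es)) (nth ?es)"
    apply (rule iso_nth)
    apply (simp add: doubleton_eq_iff)
    using c unfolding L .
  then show ?thesis unfolding s L .
qed



lemma ss:
  fixes s :: "'g::group_add"
  assumes c: "\<forall>g::'g. s + g = g + s" and i: "s + s = 0"
  shows "s + a + (s + b) = a + b"
proof -
  have "s + a + (s + b) = s + (a + s) + b" by (simp add: add.assoc del: add_uminus_conv_diff)
  also have "a + s = s + a" by (rule c[rule_format, symmetric])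
  also have "s + (s + a) + b = (s + s) + a + b" by (simp add: add.assoc del: add_uminus_conv_diff)
  finally show ?thesis using i by simp
qed

lemma star_gain:
  fixes s :: "'g::group_add"
  assumes c: "\<forall>g::'g. s + g = g + s" and i: "s + s = 0"
  shows "(s + - x + y) + (s + - y + z) + (s + - z + x) = s"
proof -
  have "(s + - x + y) + (s + - y + z) = - x + y + (- y + z)"
    using ss[OF c i, of "-x+y" "-y+z"] by (simp add: add.assoc del: add_uminus_conv_diff)
  also have "\<dots> = - x + z" by (simp add: add.assoc del: add_uminus_conv_diff)
  finally have "(s + - x + y) + (s + - y + z) + (s + - z + x) = - x + z + (s + (- z + x))"
    by (simp add: add.assoc del: add_uminus_conv_diff)
  also have "- x + z + (s + (- z + x)) = - x + z + s + - z + x" by (simp add: add.assoc del: add_uminus_conv_diff)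
  also have "- x + z + s = s + (-x + z)" by (rule c[rule_format, symmetric])
  also have "s + (- x + z) + - z + x = s" by (simp add: add.assoc del: add_uminus_conv_diff)
  finally show ?thesis .
qed

lemma neg_s: 
  fixes s :: "'g::group_add"
  assumes c: "\<forall>g::'g. s + g = g + s" and i: "s + s = 0"
  shows "- s = s" 
  using i by (metis add.inverse_unique)


lemma h1:
  fixes s :: "'g::group_add"
  assumes c: "\<forall>g::'g. s + g = g + s" and i: "s + s = 0"
  shows "s + - (- s + X) + 0 = - X"
proof -
  have "s + - (- s + X) + 0 = s + (- X + s)" by (simp add: minus_add del: add_uminus_conv_diff)
  also have "- X + s = s + - X" by (rule c[rule_format, symmetric])
  also have "s + (s + - X) = - X" using i by (simp add: add.assoc[symmetric] del: add_uminus_conv_diff)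
  finally show ?thesis .
qed

lemma h2:
  fixes s :: "'g::group_add"
  assumes c: "\<forall>g::'g. s + g = g + s" and i: "s + s = 0"
  shows "s + - (- s + X) + (- s + Y) = s + - X + Y"
proof -
  have "s + - (- s + X) + (- s + Y) = s + (- X + s) + (- s + Y)" by (simp add: minus_add del: add_uminus_conv_diff)
  also have "\<dots> = s + - X + Y" by (simp add: add.assoc del: add_uminus_conv_diff)
  finally show ?thesis .
qed

lemma h3:
  fixes s :: "'g::group_add"
  assumes c: "\<forall>g::'g. s + g = g + s" and i: "s + s = 0"
  assumes "X + Z + - Y = s"
  shows "Z = s + - X + Y"
proof -
  have "Z = - X + (X + Z + - Y) + Y" by (simp add: add.assoc del: add_uminus_conv_diff)
  also have "\<dots> = - X + s + Y" using assms(3) by simp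
  also have "- X + s = s + - X" by (rule c[rule_format, symmetric])
  finally show ?thesis .
qed

lemma construct:
  fixes s :: "'g::group_add"
  assumes c: "\<forall>g::'g. s + g = g + s" and i: "s + s = 0"
    and gain: "gain_graph V A \<zeta>" and eg: "edge_graph W Ed"
    and iso: "graph_iso Ed (line_adj Ed) V A \<phi>"
    and star: "\<forall>r p q t. p\<in>Ed \<and> q\<in>Ed \<and> t\<in>Ed \<and> p\<noteq>q \<and> q\<noteq>t \<and> p\<noteq>t \<and> r\<in>p \<and> r\<in>q \<and> r\<in>t
        \<longrightarrow> triangle_gain \<zeta> (\<phi> p) (\<phi> q) (\<phi> t) = s"
  shows "gain_line_graph s V A \<zeta>"
proof -
  define p0 where "p0 r = (SOME p. p \<in> Ed \<and> r \<in> p)" for r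
  define H where "H r q = (if q = p0 r then 0 else - s + \<zeta> (\<phi> (p0 r)) (\<phi> q))" for r q
  have anti: "\<And>u v. A u v \<Longrightarrow> \<zeta> v u = - \<zeta> u v" using gain unfolding gain_graph_def by auto
  have adj: "\<And>p q. p \<in> Ed \<Longrightarrow> q \<in> Ed \<Longrightarrow> p \<noteq> q \<Longrightarrow> p \<inter> q \<noteq> {} \<Longrightarrow> A (\<phi> p) (\<phi> q)"
    using iso unfolding graph_iso_def line_adj_def by auto
  have key: "\<zeta> (\<phi> p) (\<phi> q) = s + - H r p + H r q"
    if p: "p \<in> Ed" and q: "q \<in> Ed" and pq: "p \<noteq> q" and rp: "r \<in> p" and rq: "r \<in> q" for p q r
  proof -
    have ex: "\<exists>p. p \<in> Ed \<and> r \<in> p" using p rp by blast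
    have P: "p0 r \<in> Ed" "r \<in> p0 r" using someI_ex[OF ex] unfolding p0_def by auto
    show ?thesis
    proof (cases "p = p0 r")
      case True
      then show ?thesis using pq by (simp add: H_def add.assoc del: add_uminus_conv_diff)
    next
      case pn: False
      have A1: "A (\<phi> (p0 r)) (\<phi> p)" using adj[OF P(1) p] pn rp P by auto
      show ?thesis
      proof (cases "q = p0 r")
        case True
        have "s + - H r p + H r q = s + - (- s + \<zeta> (\<phi> (p0 r)) (\<phi> p)) + 0"
          using True pn by (simp add: H_def)
        also have "\<dots> = - \<zeta> (\<phi> (p0 r)) (\<phi> p)" by (rule h1[OF c i])
        also have "\<dots> = \<zeta> (\<phi> p) (\<phi> q)" using anti[OF A1] True by simp
        finally show ?thesis by simp
      next
        case qn: False
        have A2: "A (\<phi> (p0 r)) (\<phi> q)" using adj[OF P(1) q] qn rq P by auto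
        have tg: "\<zeta> (\<phi> (p0 r)) (\<phi> p) + \<zeta> (\<phi> p) (\<phi> q) + \<zeta> (\<phi> q) (\<phi> (p0 r)) = s"
          using star P p q pq pn qn rp rq unfolding triangle_gain_def by metis
        have z: "\<zeta> (\<phi> q) (\<phi> (p0 r)) = - \<zeta> (\<phi> (p0 r)) (\<phi> q)" using anti[OF A2] .
        have "\<zeta> (\<phi> p) (\<phi> q) = s + - \<zeta> (\<phi> (p0 r)) (\<phi> p) + \<zeta> (\<phi> (p0 r)) (\<phi> q)"
          using tg unfolding z by (rule h3[OF c i])
        also have "\<dots> = s + - (- s + \<zeta> (\<phi> (p0 r)) (\<phi> p)) + (- s + \<zeta> (\<phi> (p0 r)) (\<phi> q))"
          by (rule h2[OF c i, symmetric])
        also have "\<dots> = s + - H r p + H r q"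
          using pn qn by (simp add: H_def)
        finally show ?thesis .
      qed
    qed
  qed
  show ?thesis unfolding gain_line_graph_def
    using eg iso key by blast
qed



lemma card_transport:
  assumes iso: "graph_iso Ed LA V A \<phi>" and p: "p \<in> Ed" "q \<in> Ed" "t \<in> Ed" "e \<in> Ed"
  shows "card {x \<in> {\<phi> p, \<phi> q, \<phi> t}. A (\<phi> e) x} = card {y \<in> {p,q,t}. LA e y}"
proof -
  have b: "inj_on \<phi> Ed" and ad: "\<forall>x\<in>Ed. \<forall>y\<in>Ed. LA x y \<longleftrightarrow> A (\<phi> x) (\<phi> y)"
    using iso unfolding graph_iso_def bij_betw_def by auto
  have "{x \<in> {\<phi> p, \<phi> q, \<phi> t}. A (\<phi> e) x} = \<phi> ` {y \<in> {p,q,t}. LA e y}"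
    using ad p by auto
  moreover have "inj_on \<phi> {y \<in> {p,q,t}. LA e y}" by (rule inj_on_subset[OF b]) (use p in auto)
  ultimately show ?thesis by (simp add: card_image)
qed

lemma two_eq:
  assumes "card e = 2" "x \<in> e" "z \<in> e" "x \<noteq> z"
  shows "e = {x,z}"
proof -
  obtain u v where "e = {u,v}" "u \<noteq> v" using card_2_iff[THEN iffD1, OF assms(1)] by blast
  then show ?thesis using assms by auto
qed

lemma even_tri_aux:
  assumes d: "x\<noteq>y" "y\<noteq>z" "x\<noteq>z"
    and "e \<inter> {x,y,z} = {} \<or> e \<inter> {x,y,z} = {x} \<or> e \<inter> {x,y,z} = {y} \<or> e \<inter> {x,y,z} = {z}"
  shows "even (card {w \<in> {{x,z},{x,y},{y,z}}. w \<inter> e \<noteq> {}})"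
  using assms(4)
proof (elim disjE)
    assume h: "e \<inter> {x,y,z} = {}"
    have m1: "x \<notin> e" using h by blast
    have m2: "y \<notin> e" using h by blast
    have m3: "z \<notin> e" using h by blast
    have "{w \<in> {{x,z},{x,y},{y,z}}. w \<inter> e \<noteq> {}} = {}"
      apply (rule f3_0[where P="\<lambda>w. w \<inter> e \<noteq> {}"]) using m1 m2 m3 by auto
    then show "even (card {w \<in> {{x,z},{x,y},{y,z}}. w \<inter> e \<noteq> {}})" by (simp only: card.empty even_zero)
next
    assume h: "e \<inter> {x,y,z} = {x}"
    have m1: "x \<in> e" using h by blast
    have m2: "y \<notin> e" using h d by (metis IntI insertCI singletonD)
    have m3: "z \<notin> e" using h d by (metis IntI insertCI singletonD)
    have "{w \<in> {{x,z},{x,y},{y,z}}. w \<inter> e \<noteq> {}} = {{x,z},{x,y}}"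
      apply (rule f3_ab[where P="\<lambda>w. w \<inter> e \<noteq> {}"]) using m1 m2 m3 by auto
    then show "even (card {w \<in> {{x,z},{x,y},{y,z}}. w \<inter> e \<noteq> {}})" using d by (simp only:) (simp add: doubleton_eq_iff)
next
    assume h: "e \<inter> {x,y,z} = {y}"
    have m1: "y \<in> e" using h by blast
    have m2: "x \<notin> e" using h d by (metis IntI insertCI singletonD)
    have m3: "z \<notin> e" using h d by (metis IntI insertCI singletonD)
    have "{w \<in> {{x,z},{x,y},{y,z}}. w \<inter> e \<noteq> {}} = {{x,y},{y,z}}"
      apply (rule f3_bc[where P="\<lambda>w. w \<inter> e \<noteq> {}"]) using m1 m2 m3 by auto
    then show "even (card {w \<in> {{x,z},{x,y},{y,z}}. w \<inter> e \<noteq> {}})" using d by (simp only:) (simp add: doubleton_eq_iff)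
next
    assume h: "e \<inter> {x,y,z} = {z}"
    have m1: "z \<in> e" using h by blast
    have m2: "x \<notin> e" using h d by (metis IntI insertCI singletonD)
    have m3: "y \<notin> e" using h d by (metis IntI insertCI singletonD)
    have "{w \<in> {{x,z},{x,y},{y,z}}. w \<inter> e \<noteq> {}} = {{x,z},{y,z}}"
      apply (rule f3_ac[where P="\<lambda>w. w \<inter> e \<noteq> {}"]) using m1 m2 m3 by auto
    then show "even (card {w \<in> {{x,z},{x,y},{y,z}}. w \<inter> e \<noteq> {}})" using d by (simp only:) (simp add: doubleton_eq_iff)
qed

lemma even_tri:
  assumes d: "x\<noteq>y" "y\<noteq>z" "x\<noteq>z" and e: "card e = 2"
    and T: "{x,z}\<in>Ed" "{x,y}\<in>Ed" "{y,z}\<in>Ed" and eE: "e\<in>Ed"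
  shows "even (card {w \<in> {{x,z},{x,y},{y,z}}. line_adj Ed e w})"
proof -
  obtain u v where uv: "e = {u,v}" "u\<noteq>v" using card_2_iff[THEN iffD1, OF e] by blast
  consider "e = {x,z}" | "e = {x,y}" | "e={y,z}" | "e \<notin> {{x,z},{x,y},{y,z}}" by blast
  then show ?thesis
  proof cases
    case 1
    have "{w \<in> {{x,z},{x,y},{y,z}}. line_adj Ed e w} = {{x,y},{y,z}}"
      using 1 d T by (auto simp: line_adj_def doubleton_eq_iff)
    then show ?thesis using d by (simp add: doubleton_eq_iff)
  next
    case 2
    have "{w \<in> {{x,z},{x,y},{y,z}}. line_adj Ed e w} = {{x,z},{y,z}}"
      using 2 d T by (auto simp: line_adj_def doubleton_eq_iff)
    then show ?thesis using d by (simp add: doubleton_eq_iff)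
  next
    case 3
    have "{w \<in> {{x,z},{x,y},{y,z}}. line_adj Ed e w} = {{x,z},{x,y}}"
      using 3 d T by (auto simp: line_adj_def doubleton_eq_iff)
    then show ?thesis using d by (simp add: doubleton_eq_iff)
  next
    case 4
    have la: "line_adj Ed e w \<longleftrightarrow> w \<inter> e \<noteq> {}" if "w \<in> {{x,z},{x,y},{y,z}}" for w
    proof -
      have "w \<in> Ed" using that T by auto
      moreover have "e \<noteq> w" using that 4 by auto
      ultimately show ?thesis using eE unfolding line_adj_def by blast
    qed
    have eq: "{w \<in> {{x,z},{x,y},{y,z}}. line_adj Ed e w} = {w \<in> {{x,z},{x,y},{y,z}}. w \<inter> e \<noteq> {}}"
      using la by blast
    have ns: "\<not> (u \<in> {x,y,z} \<and> v \<in> {x,y,z})"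
    proof
      assume "u \<in> {x,y,z} \<and> v \<in> {x,y,z}"
      then have "{u,v} \<in> {{x,z},{x,y},{y,z}}" using uv(2) by (auto simp: doubleton_eq_iff)
      then show False using 4 uv by simp
    qed
    have "e \<inter> {x,y,z} = {} \<or> e \<inter> {x,y,z} = {x} \<or> e \<inter> {x,y,z} = {y} \<or> e \<inter> {x,y,z} = {z}"
    proof (cases "u \<in> {x,y,z}")
      case True
      then have "v \<notin> {x,y,z}" using ns by blast
      then have "e \<inter> {x,y,z} = {u}" using True uv by auto
      then show ?thesis using True by auto
    next
      case False
      show ?thesis
      proof (cases "v \<in> {x,y,z}")
        case True
        then have "e \<inter> {x,y,z} = {v}" using False uv by auto
        then show ?thesis using True by auto
      next
        case F2: False
        then show ?thesis using False uv by auto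
      qed
    qed
    then show ?thesis unfolding eq by (rule even_tri_aux[OF d])
  qed
qed



lemma la_out:
  assumes eE: "e \<in> Ed" and wE: "w \<in> Ed" and ws: "w \<subseteq> S" and e: "e = {u,v}" and v: "v \<notin> S"
  shows "line_adj Ed e w \<longleftrightarrow> u \<in> w"
proof -
  have "e \<noteq> w" using ws e v by blast
  moreover have "e \<inter> w \<noteq> {} \<longleftrightarrow> u \<in> w" using ws e v by blast
  ultimately show ?thesis using eE wE unfolding line_adj_def by blast
qed

lemma edge_struct:
  assumes eg: "edge_graph W Ed" and iso: "graph_iso Ed (line_adj Ed) V A \<phi>"
    and conn: "graph_connected V A" and sg: "simple_graph V A"
    and d: "distinct [r,a,b,c]" and P: "{r,a}\<in>Ed" "{r,b}\<in>Ed" "{r,c}\<in>Ed"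
    and ev: "\<forall>e\<in>Ed. even (card {y\<in>{{r,a},{r,b},{r,c}}. line_adj Ed e y})"
  shows "\<forall>e\<in>Ed. e \<in> {{r,a},{r,b},{r,c},{a,b},{b,c},{a,c}}"
proof -
  let ?S = "{r,a,b,c}"
  have c2: "card e = 2" if "e \<in> Ed" for e using eg that unfolding edge_graph_def by auto
  have dd: "r\<noteq>a" "r\<noteq>b" "r\<noteq>c" "a\<noteq>b" "a\<noteq>c" "b\<noteq>c" using d by auto
  have nd: "{r,a} \<noteq> {r,b}" "{r,a} \<noteq> {r,c}" "{r,b} \<noteq> {r,c}" using dd by (auto simp: doubleton_eq_iff)
  have bad: False if eE: "e \<in> Ed" and e: "e = {u,v}" and u: "u \<in> ?S" and v: "v \<notin> ?S" for e u v
  proof -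
    have L: "line_adj Ed e w \<longleftrightarrow> u \<in> w" if "w \<in> {{r,a},{r,b},{r,c}}" for w
      apply (rule la_out[OF eE _ _ e v]) using that P by auto
    have eq: "{y\<in>{{r,a},{r,b},{r,c}}. line_adj Ed e y} = {y\<in>{{r,a},{r,b},{r,c}}. u \<in> y}"
      using L by blast
    have "odd (card {y\<in>{{r,a},{r,b},{r,c}}. u \<in> y})"
    proof -
      consider "u = r" | "u = a" | "u = b" | "u = c" using u by blast
      then show ?thesis
      proof cases
        case 1
        have "{y\<in>{{r,a},{r,b},{r,c}}. u \<in> y} = {{r,a},{r,b},{r,c}}"
          apply (rule f3_abc[where P="\<lambda>y. u \<in> y"]) using 1 by auto
        then show ?thesis using nd by (simp only:) simp
      next
        case 2
        have "{y\<in>{{r,a},{r,b},{r,c}}. u \<in> y} = {{r,a}}"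
          apply (rule f3_a[where P="\<lambda>y. u \<in> y"]) using 2 dd by auto
        then show ?thesis by (simp only:) simp
      next
        case 3
        have "{y\<in>{{r,a},{r,b},{r,c}}. u \<in> y} = {{r,b}}"
          apply (rule f3_b[where P="\<lambda>y. u \<in> y"]) using 3 dd by auto
        then show ?thesis by (simp only:) simp
      next
        case 4
        have "{y\<in>{{r,a},{r,b},{r,c}}. u \<in> y} = {{r,c}}"
          apply (rule f3_c[where P="\<lambda>y. u \<in> y"]) using 4 dd by auto
        then show ?thesis by (simp only:) simp
      qed
    qed
    moreover have "even (card {y\<in>{{r,a},{r,b},{r,c}}. line_adj Ed e y})" using ev eE by blast
    ultimately show False unfolding eq by blast
  qed
  have claim1: "e \<subseteq> ?S" if eE: "e \<in> Ed" and ne: "e \<inter> ?S \<noteq> {}" for e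
  proof (rule ccontr)
    assume ns: "\<not> e \<subseteq> ?S"
    obtain u v where uv: "e = {u,v}" "u \<noteq> v" using card_2_iff[THEN iffD1, OF c2[OF eE]] by blast
    have "u \<in> ?S \<and> v \<notin> ?S \<or> v \<in> ?S \<and> u \<notin> ?S" using ns ne uv by blast
    then show False
    proof
      assume "u \<in> ?S \<and> v \<notin> ?S" then show False using bad[OF eE uv(1)] by blast
    next
      assume "v \<in> ?S \<and> u \<notin> ?S" then show False using bad[OF eE, of v u] uv(1) by (metis insert_commute)
    qed
  qed
  have bij: "bij_betw \<phi> Ed V" and ad: "\<forall>x\<in>Ed. \<forall>y\<in>Ed. line_adj Ed x y \<longleftrightarrow> A (\<phi> x) (\<phi> y)"
    using iso unfolding graph_iso_def by auto
  define ip where "ip = inv_into Ed \<phi>"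
  have ip: "ip v \<in> Ed" "\<phi> (ip v) = v" if "v \<in> V" for v
    using that bij unfolding ip_def bij_betw_def by (auto intro: inv_into_into f_inv_into_f)
  have ip2: "ip (\<phi> e) = e" if "e \<in> Ed" for e
    using that bij unfolding ip_def bij_betw_def by (auto intro: inv_into_f_f)
  have v0: "\<phi> {r,a} \<in> V" using bij P(1) by (rule bij_betw_apply)
  have reach: "v \<in> V \<and> ip v \<subseteq> ?S" if "A\<^sup>*\<^sup>* (\<phi> {r,a}) v" for v
    using that
  proof (induction rule: rtranclp_induct)
    case base
    show ?case using v0 ip2[OF P(1)] by auto
  next
    case (step y z)
    have yV: "y \<in> V" and yS: "ip y \<subseteq> ?S" using step.IH by auto
    have zV: "z \<in> V" using sg step.hyps(2) unfolding simple_graph_def by blast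
    have "A (\<phi> (ip y)) (\<phi> (ip z))" using ip(2)[OF yV] ip(2)[OF zV] step.hyps(2) by simp
    then have "line_adj Ed (ip y) (ip z)" using ad ip(1)[OF yV] ip(1)[OF zV] by blast
    then have "ip y \<inter> ip z \<noteq> {}" unfolding line_adj_def by blast
    then have "ip z \<inter> ?S \<noteq> {}" using yS by blast
    then have "ip z \<subseteq> ?S" using claim1 ip(1)[OF zV] by blast
    then show ?case using zV by blast
  qed
  show ?thesis
  proof
    fix e assume eE: "e \<in> Ed"
    have "\<phi> e \<in> V" using bij eE by (rule bij_betw_apply)
    then have "A\<^sup>*\<^sup>* (\<phi> {r,a}) (\<phi> e)" using conn v0 unfolding graph_connected_def by blast
    then have eS: "e \<subseteq> ?S" using reach ip2[OF eE] by metis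
    obtain u v where uv: "e = {u,v}" "u \<noteq> v" using card_2_iff[THEN iffD1, OF c2[OF eE]] by blast
    have "u \<in> ?S" "v \<in> ?S" using eS uv by auto
    then show "e \<in> {{r,a},{r,b},{r,c},{a,b},{b,c},{a,c}}" using uv
      by (auto simp: insert_commute)
  qed
qed



lemma sel_none: "\<forall>e\<in>Ed. e \<in> {A1,A2,A3,B1,B2,B3} \<Longrightarrow> A1\<in>Ed \<Longrightarrow> A2\<in>Ed \<Longrightarrow> A3\<in>Ed
  \<Longrightarrow> B1\<notin>Ed \<Longrightarrow> B2\<notin>Ed \<Longrightarrow> B3\<notin>Ed \<Longrightarrow> Ed = {A1,A2,A3}" by auto
lemma sel_1: "\<forall>e\<in>Ed. e \<in> {A1,A2,A3,B1,B2,B3} \<Longrightarrow> A1\<in>Ed \<Longrightarrow> A2\<in>Ed \<Longrightarrow> A3\<in>Ed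
  \<Longrightarrow> B1\<in>Ed \<Longrightarrow> B2\<notin>Ed \<Longrightarrow> B3\<notin>Ed \<Longrightarrow> Ed = {A1,A2,A3,B1}" by auto
lemma sel_2: "\<forall>e\<in>Ed. e \<in> {A1,A2,A3,B1,B2,B3} \<Longrightarrow> A1\<in>Ed \<Longrightarrow> A2\<in>Ed \<Longrightarrow> A3\<in>Ed
  \<Longrightarrow> B1\<in>Ed \<Longrightarrow> B2\<in>Ed \<Longrightarrow> B3\<notin>Ed \<Longrightarrow> Ed = {A1,A2,A3,B1,B2}" by auto
lemma sel_3: "\<forall>e\<in>Ed. e \<in> {A1,A2,A3,B1,B2,B3} \<Longrightarrow> A1\<in>Ed \<Longrightarrow> A2\<in>Ed \<Longrightarrow> A3\<in>Ed
  \<Longrightarrow> B1\<in>Ed \<Longrightarrow> B2\<in>Ed \<Longrightarrow> B3\<in>Ed \<Longrightarrow> Ed = {A1,A2,A3,B1,B2,B3}" by auto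

lemma two_ex:
  assumes "card p = 2" "r \<in> p"
  shows "\<exists>a. p = {r,a} \<and> a \<noteq> r"
proof -
  obtain u v where uv: "p = {u,v}" "u \<noteq> v" using card_2_iff[THEN iffD1, OF assms(1)] by blast
  show ?thesis
  proof (cases "u = r")
    case True then show ?thesis using uv by blast
  next
    case False then have "v = r" using uv assms(2) by blast
    then show ?thesis using uv by (metis insert_commute)
  qed
qed

lemma K3_star_free:
  "\<forall>r p q t. p\<in>{{0,1},{1,2},{0,2::nat}} \<and> q\<in>{{0,1},{1,2},{0,2::nat}} \<and> t\<in>{{0,1},{1,2},{0,2::nat}}
     \<and> p\<noteq>q \<and> q\<noteq>t \<and> p\<noteq>t \<and> r\<in>p \<and> r\<in>q \<and> r\<in>t \<longrightarrow> False"
  by auto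

theorem mainTheorem6:
  fixes s :: "'g::group_add"
    and V :: "'v set" and A :: "'v \<Rightarrow> 'v \<Rightarrow> bool" and \<zeta> :: "'v \<Rightarrow> 'v \<Rightarrow> 'g"
  assumes central: "\<forall>g::'g. s + g = g + s"
    and invol: "s + s = 0" "s \<noteq> 0"
    and gain: "gain_graph V A \<zeta>"
    and conn: "graph_connected V A"
    and line: "\<exists>W Ed. edge_graph W Ed \<and> isomorphic Ed (line_adj Ed) V A"
    and notF1: "\<not> isomorphic V A {0..<4} F1_adj"
    and notF2: "\<not> isomorphic V A {0..<5} F2_adj"
    and notF3: "\<not> isomorphic V A {0..<6} F3_adj"
  shows "gain_line_graph s V A \<zeta> \<longleftrightarrow>
    (\<forall>a b c. odd_triangle V A a b c \<longrightarrow> triangle_gain \<zeta> a b c = s)"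
proof
  assume gl: "gain_line_graph s V A \<zeta>"
  show "\<forall>a b c. odd_triangle V A a b c \<longrightarrow> triangle_gain \<zeta> a b c = s"
  proof (intro allI impI)
    fix a b c assume ot: "odd_triangle V A a b c"
    obtain W Ed \<phi> and H :: "nat \<Rightarrow> nat set \<Rightarrow> 'g" where eg: "edge_graph W Ed"
      and iso: "graph_iso Ed (line_adj Ed) V A \<phi>"
      and Hf: "\<forall>p\<in>Ed. \<forall>q\<in>Ed. \<forall>r. p \<noteq> q \<and> r \<in> p \<and> r \<in> q \<longrightarrow> \<zeta> (\<phi> p) (\<phi> q) = s + - H r p + H r q"
      using gl unfolding gain_line_graph_def by blast
    have c2: "card e = 2" if "e \<in> Ed" for e using eg that unfolding edge_graph_def by auto
    have bij: "bij_betw \<phi> Ed V" and ad: "\<forall>x\<in>Ed. \<forall>y\<in>Ed. line_adj Ed x y \<longleftrightarrow> A (\<phi> x) (\<phi> y)"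
      using iso unfolding graph_iso_def by auto
    define ip where "ip = inv_into Ed \<phi>"
    have ip: "ip v \<in> Ed" "\<phi> (ip v) = v" if "v \<in> V" for v
      using that bij unfolding ip_def bij_betw_def by (auto intro: inv_into_into f_inv_into_f)
    have tri: "a \<in> V" "b \<in> V" "c \<in> V" "A a b" "A b c" "A c a"
      and ow: "\<exists>w\<in>V. odd (card {x \<in> {a, b, c}. A w x})"
      using ot unfolding odd_triangle_def triangle_def by auto
    define p where "p = ip a"
    define q where "q = ip b"
    define t where "t = ip c"
    have E: "p \<in> Ed" "q \<in> Ed" "t \<in> Ed" using ip tri unfolding p_def q_def t_def by auto
    have F: "\<phi> p = a" "\<phi> q = b" "\<phi> t = c" using ip tri unfolding p_def q_def t_def by auto
    have lpq: "line_adj Ed p q" using ad E F tri by blast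
    have lqt: "line_adj Ed q t" using ad E F tri by blast
    have ltp: "line_adj Ed t p" using ad E F tri by blast
    show "triangle_gain \<zeta> a b c = s"
    proof (cases "\<exists>r. r \<in> p \<and> r \<in> q \<and> r \<in> t")
      case True
      then obtain r where r: "r \<in> p" "r \<in> q" "r \<in> t" by blast
      have "\<zeta> a b = s + - H r p + H r q" using Hf E F r lpq unfolding line_adj_def by metis
      moreover have "\<zeta> b c = s + - H r q + H r t" using Hf E F r lqt unfolding line_adj_def by metis
      moreover have "\<zeta> c a = s + - H r t + H r p" using Hf E F r ltp unfolding line_adj_def by metis
      ultimately show ?thesis unfolding triangle_gain_def using star_gain[OF central invol(1)] by simp
    next
      case False
      obtain x where x: "x \<in> p" "x \<in> q" using lpq unfolding line_adj_def by blast
      obtain y where y: "y \<in> q" "y \<in> t" using lqt unfolding line_adj_def by blast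
      obtain z where z: "z \<in> t" "z \<in> p" using ltp unfolding line_adj_def by blast
      have d: "x \<noteq> y" "y \<noteq> z" "x \<noteq> z" using False x y z by blast+
      have pe: "p = {x,z}" using two_eq[OF c2[OF E(1)] x(1) z(2) d(3)] .
      have qe: "q = {x,y}" using two_eq[OF c2[OF E(2)] x(2) y(1) d(1)] .
      have te: "t = {y,z}" using two_eq[OF c2[OF E(3)] y(2) z(1) d(2)] .
      obtain w where wV: "w \<in> V" and wo: "odd (card {x \<in> {a, b, c}. A w x})" using ow by blast
      define e where "e = ip w"
      have eE: "e \<in> Ed" and we: "\<phi> e = w" using ip wV unfolding e_def by auto
      have "card {x \<in> {\<phi> p, \<phi> q, \<phi> t}. A (\<phi> e) x} = card {y \<in> {p,q,t}. line_adj Ed e y}"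
        by (rule card_transport[OF iso E eE])
      then have "odd (card {y \<in> {p,q,t}. line_adj Ed e y})" using wo F we by simp
      moreover have "even (card {w \<in> {{x,z},{x,y},{y,z}}. line_adj Ed e w})"
        using even_tri[OF d c2[OF eE], of Ed] E pe qe te eE by blast
      ultimately show ?thesis using pe qe te by simp
    qed
  qed
next
  assume hyp: "\<forall>a b c. odd_triangle V A a b c \<longrightarrow> triangle_gain \<zeta> a b c = s"
  obtain W Ed \<phi> where eg: "edge_graph W Ed" and iso: "graph_iso Ed (line_adj Ed) V A \<phi>"
    using line unfolding isomorphic_def by blast
  have isoE: "isomorphic Ed (line_adj Ed) V A" using iso unfolding isomorphic_def by blast
  have sg: "simple_graph V A" using gain unfolding gain_graph_def by blast
  have c2: "card e = 2" if "e \<in> Ed" for e using eg that unfolding edge_graph_def by auto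
  have bij: "bij_betw \<phi> Ed V" and ad: "\<forall>x\<in>Ed. \<forall>y\<in>Ed. line_adj Ed x y \<longleftrightarrow> A (\<phi> x) (\<phi> y)"
    using iso unfolding graph_iso_def by auto
  show "gain_line_graph s V A \<zeta>"
  proof (cases "\<forall>r p q t. p\<in>Ed \<and> q\<in>Ed \<and> t\<in>Ed \<and> p\<noteq>q \<and> q\<noteq>t \<and> p\<noteq>t \<and> r\<in>p \<and> r\<in>q \<and> r\<in>t
        \<longrightarrow> odd_triangle V A (\<phi> p) (\<phi> q) (\<phi> t)")
    case True
    show ?thesis
      by (rule construct[OF central invol(1) gain eg iso]) (use True hyp in blast)
  next
    case False
    then obtain r p q t where E: "p\<in>Ed" "q\<in>Ed" "t\<in>Ed" and ne: "p\<noteq>q" "q\<noteq>t" "p\<noteq>t"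
      and R: "r\<in>p" "r\<in>q" "r\<in>t" and nod: "\<not> odd_triangle V A (\<phi> p) (\<phi> q) (\<phi> t)" by blast
    obtain a where pa: "p = {r,a}" "a \<noteq> r" using two_ex[OF c2[OF E(1)] R(1)] by blast
    obtain b where qb: "q = {r,b}" "b \<noteq> r" using two_ex[OF c2[OF E(2)] R(2)] by blast
    obtain c where tc: "t = {r,c}" "c \<noteq> r" using two_ex[OF c2[OF E(3)] R(3)] by blast
    have d: "distinct [r,a,b,c]" using pa qb tc ne by auto
    have V3: "\<phi> p \<in> V" "\<phi> q \<in> V" "\<phi> t \<in> V" using bij E by (auto intro: bij_betw_apply)
    have "line_adj Ed p q" "line_adj Ed q t" "line_adj Ed t p" using E ne R unfolding line_adj_def by blast+
    then have "triangle V A (\<phi> p) (\<phi> q) (\<phi> t)" using V3 ad E unfolding triangle_def by blast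
    then have nw: "\<forall>w\<in>V. even (card {x \<in> {\<phi> p, \<phi> q, \<phi> t}. A w x})"
      using nod unfolding odd_triangle_def by blast
    have ev: "\<forall>e\<in>Ed. even (card {y\<in>{{r,a},{r,b},{r,c}}. line_adj Ed e y})"
    proof
      fix e assume eE: "e \<in> Ed"
      have "\<phi> e \<in> V" using bij eE by (rule bij_betw_apply)
      then have "even (card {x \<in> {\<phi> p, \<phi> q, \<phi> t}. A (\<phi> e) x})" using nw by blast
      then show "even (card {y\<in>{{r,a},{r,b},{r,c}}. line_adj Ed e y})"
        using card_transport[OF iso E eE] pa qb tc by simp
    qed
    have P: "{r,a}\<in>Ed" "{r,b}\<in>Ed" "{r,c}\<in>Ed" using E pa qb tc by auto
    have six: "\<forall>e\<in>Ed. e \<in> {{r,a},{r,b},{r,c},{a,b},{b,c},{a,c}}"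
      by (rule edge_struct[OF eg iso conn sg d P ev])
    have dd: "r\<noteq>a" "r\<noteq>b" "r\<noteq>c" "a\<noteq>b" "a\<noteq>c" "b\<noteq>c" using d by auto
    have F1c: False if "isomorphic Ed (line_adj Ed) {0..<4} F1_adj"
      using isomorphic_trans2[OF isoE that] notF1 by blast
    have F2c: False if "isomorphic Ed (line_adj Ed) {0..<5} F2_adj"
      using isomorphic_trans2[OF isoE that] notF2 by blast
    have F3c: False if "isomorphic Ed (line_adj Ed) {0..<6} F3_adj"
      using isomorphic_trans2[OF isoE that] notF3 by blast
    show ?thesis
    proof (cases "{a,b} \<in> Ed"; cases "{b,c} \<in> Ed"; cases "{a,c} \<in> Ed")
      assume h: "{a,b} \<in> Ed" "{b,c} \<in> Ed" "{a,c} \<in> Ed"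
      have "Ed = {{r,a},{r,b},{r,c},{a,b},{b,c},{a,c}}" by (rule sel_3[OF six P h])
      then have "Ed = {{r,a},{b,c},{r,b},{a,c},{r,c},{a,b}}" by (simp add: insert_commute)
      then show ?thesis using F3c F3_iso[OF d] by blast
    next
      assume h: "{a,b} \<in> Ed" "{b,c} \<in> Ed" "{a,c} \<notin> Ed"
      have "Ed = {{r,a},{r,b},{r,c},{a,b},{b,c}}" by (rule sel_2[OF six P h])
      then have "Ed = {{r,b},{r,a},{r,c},{b,c},{a,b}}" by (simp add: insert_commute)
      then show ?thesis using F2c F2_iso[OF d] by blast
    next
      assume h: "{a,b} \<in> Ed" "{b,c} \<notin> Ed" "{a,c} \<in> Ed"
      have "Ed = {{r,a},{r,b},{r,c},{a,b},{a,c}}"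
        by (rule sel_2[OF _ P h(1) h(3) h(2)]) (use six in blast)
      moreover have "distinct [r,c,a,b]" using dd by auto
      ultimately show ?thesis using F2c F2_iso[of r c a b Ed] by (simp add: insert_commute)
    next
      assume h: "{a,b} \<in> Ed" "{b,c} \<notin> Ed" "{a,c} \<notin> Ed"
      have "Ed = {{r,a},{r,b},{r,c},{a,b}}" by (rule sel_1[OF _ P h(1) h(2) h(3)]) (use six in blast)
      then show ?thesis using F1c F1_iso[OF d] by blast
    next
      assume h: "{a,b} \<notin> Ed" "{b,c} \<in> Ed" "{a,c} \<in> Ed"
      have "Ed = {{r,a},{r,b},{r,c},{b,c},{a,c}}"
        by (rule sel_2[OF _ P h(2) h(3) h(1)]) (use six in blast)
      moreover have "distinct [r,b,c,a]" using dd by auto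
      ultimately show ?thesis using F2c F2_iso[of r b c a Ed] by (simp add: insert_commute)
    next
      assume h: "{a,b} \<notin> Ed" "{b,c} \<in> Ed" "{a,c} \<notin> Ed"
      have "Ed = {{r,a},{r,b},{r,c},{b,c}}" by (rule sel_1[OF _ P h(2) h(1) h(3)]) (use six in blast)
      moreover have "distinct [r,b,c,a]" using dd by auto
      ultimately show ?thesis using F1c F1_iso[of r b c a Ed] by (simp add: insert_commute)
    next
      assume h: "{a,b} \<notin> Ed" "{b,c} \<notin> Ed" "{a,c} \<in> Ed"
      have "Ed = {{r,a},{r,b},{r,c},{a,c}}" by (rule sel_1[OF _ P h(3) h(1) h(2)]) (use six in blast)
      moreover have "distinct [r,a,c,b]" using dd by auto
      ultimately show ?thesis using F1c F1_iso[of r a c b Ed] by (simp add: insert_commute)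
    next
      assume h: "{a,b} \<notin> Ed" "{b,c} \<notin> Ed" "{a,c} \<notin> Ed"
      have EdK: "Ed = {{r,a},{r,b},{r,c}}" by (rule sel_none[OF six P h])
      obtain f where f: "graph_iso {0..<3::nat} (\<lambda>i j. i \<noteq> j) Ed (line_adj Ed) f"
        using K3_iso[OF d EdK] by blast
      let ?E' = "{{0,1},{1,2},{0,2::nat}}"
      have g: "graph_iso ?E' (line_adj ?E') {0..<3::nat} (\<lambda>i j. i \<noteq> j) (inv_into {0..<3} (nth [{0,1},{1,2},{0,2::nat}]))"
        by (rule iso_inv[OF K3_tri])
      define \<psi> where "\<psi> = \<phi> \<circ> (f \<circ> inv_into {0..<3} (nth [{0,1},{1,2},{0,2::nat}]))"
      have iso': "graph_iso ?E' (line_adj ?E') V A \<psi>"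
        unfolding \<psi>_def by (rule iso_comp[OF iso_comp[OF g f] iso])
      have eg': "edge_graph {0,1,2} ?E'" unfolding edge_graph_def by auto
      have st: "\<forall>r p q t. p\<in>?E' \<and> q\<in>?E' \<and> t\<in>?E' \<and> p\<noteq>q \<and> q\<noteq>t \<and> p\<noteq>t \<and> r\<in>p \<and> r\<in>q \<and> r\<in>t
        \<longrightarrow> triangle_gain \<zeta> (\<psi> p)
              (\<psi> q)
              (\<psi> t) = s"
      proof (intro allI impI)
        fix r p q t assume H: "p\<in>?E' \<and> q\<in>?E' \<and> t\<in>?E' \<and> p\<noteq>q \<and> q\<noteq>t \<and> p\<noteq>t \<and> r\<in>p \<and> r\<in>q \<and> r\<in>t"
        show "triangle_gain \<zeta> (\<psi> p)
              (\<psi> q)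
              (\<psi> t) = s"
          using K3_star_free[rule_format, OF H] by (rule FalseE)
      qed
      show ?thesis
        by (rule construct[OF central invol(1) gain eg' iso' st])
    qed
  qed
qed

end
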